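(* Let $\mathcal{B}_t(x)$ denote the generalized binomial series, defined for real $t$ by $\mathcal{B}_t(x)^r=\sum_{k\ge0}\binom{tk+r}{k}\frac{r}{tk+r}x^k$ for all real $r$. Then $\mathcal{B}_3(x)$, the power series solution of $X=1+xX^3$, satisfies $$\mathcal{B}_3(x)=\mathcal{B}_{3/2}(x^{1/2})^{1/2}\,\mathcal{B}_{3/2}(-x^{1/2})^{1/2}.$$ Moreover, the two other roots $\sigma_1,\sigma_2$ of $xX^3-X+1=0$ satisfy $x^{1/2}\sigma_1=-\mathcal{B}_{3/2}(-x^{1/2})^{-1/2}$ and $x^{1/2}\sigma_2=\mathcal{B}_{3/2}(x^{1/2})^{-1/2}$, so that $xX^3-X+1=x(X-\mathcal{B}_3(x))(X-\sigma_1)(X-\sigma_2)$.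
   Context: Here $\binom{a}{k}$ for real $a$ denotes the usual generalized binomial coefficient $a(a-1)\cdots(a-k+1)/k!$. *)

theory Defs
  imports Complex_Main "HOL-Computational_Algebra.Formal_Laurent_Series"
    "HOL-Computational_Algebra.Polynomial"
begin

definition gen_binom_series :: "real \<Rightarrow> real \<Rightarrow> real fps" where
  "gen_binom_series t r =
     Abs_fps (\<lambda>k. ((t * real k + r) gchoose k) * r / (t * real k + r))"

end

theory Submission
  imports Defs
begin

definition Aco :: "real \<Rightarrow> nat \<Rightarrow> real \<Rightarrow> real" where
  "Aco t k r = (if k = 0 then 1 else r / real k * ((t * real k + r - 1) gchoose (k - 1)))"

lemma gch_Suc: "(a::real) gchoose Suc n = (a gchoose n) * ((1 / real (Suc n)) * (a - real n))"
  by (simp add: gbinomial_prod_rev prod.atLeast0_lessThan_Suc fact_Suc field_simps)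

definition polyfun :: "(real \<Rightarrow> real) \<Rightarrow> bool" where
  "polyfun f \<longleftrightarrow> (\<exists>p. \<forall>y. f y = poly p y)"

lemma polyfun_const: "polyfun (\<lambda>y. c)"
  unfolding polyfun_def by (rule exI[of _ "[:c:]"]) simp

lemma polyfun_id: "polyfun (\<lambda>y. y)"
  unfolding polyfun_def by (rule exI[of _ "[:0,1:]"]) simp

lemma polyfun_add: "polyfun f \<Longrightarrow> polyfun g \<Longrightarrow> polyfun (\<lambda>y. f y + g y)"
  unfolding polyfun_def by (metis poly_add)

lemma polyfun_mult: "polyfun f \<Longrightarrow> polyfun g \<Longrightarrow> polyfun (\<lambda>y. f y * g y)"
  unfolding polyfun_def by (metis poly_mult)

lemma polyfun_diff: "polyfun f \<Longrightarrow> polyfun g \<Longrightarrow> polyfun (\<lambda>y. f y - g y)"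
  unfolding polyfun_def by (metis poly_diff)

lemma polyfun_sum: "(\<And>k. k \<in> S \<Longrightarrow> polyfun (f k)) \<Longrightarrow> polyfun (\<lambda>y. \<Sum>k\<in>S. f k y)"
proof (induction S rule: infinite_finite_induct)
  case (infinite A) then show ?case by (simp add: polyfun_const)
next
  case empty then show ?case by (simp add: polyfun_const)
next
  case (insert x F) then show ?case by (simp add: polyfun_add)
qed

lemma polyfun_gchoose: "polyfun f \<Longrightarrow> polyfun (\<lambda>y. f y gchoose n)"
proof (induction n)
  case 0 then show ?case by (simp add: polyfun_const)
next
  case (Suc n)
  have eq: "(\<lambda>y. f y gchoose Suc n) = (\<lambda>y. (f y gchoose n) * ((1 / real (Suc n)) * (f y - real n)))"
  proof
    fix y
    show "f y gchoose Suc n = (f y gchoose n) * ((1 / real (Suc n)) * (f y - real n))"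
      by (rule gch_Suc)
  qed
  show ?case unfolding eq
    by (intro polyfun_mult Suc polyfun_const polyfun_diff)
qed

lemma polyfun_periodic:
  assumes "polyfun f" "\<And>y. f y = f (y - 1)"
  shows "f y = f 0"
proof -
  obtain p where p: "\<And>y. f y = poly p y" using assms(1) unfolding polyfun_def by blast
  define q where "q = p - [:f 0:]"
  have nat: "f (real n) = f 0" for n
  proof (induction n)
    case (Suc n) then show ?case using assms(2)[of "real (Suc n)"] by simp
  qed simp
  have "q = 0"
  proof (rule ccontr)
    assume "q \<noteq> 0"
    then have "finite {x. poly q x = 0}" by (rule poly_roots_finite)
    moreover have "range (real :: nat \<Rightarrow> real) \<subseteq> {x. poly q x = 0}"
      using nat p by (auto simp: q_def)
    moreover have "infinite (range (real :: nat \<Rightarrow> real))"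
      using range_inj_infinite[of "real :: nat \<Rightarrow> real"] by (simp add: inj_on_def)
    ultimately show False using finite_subset by blast
  qed
  then show ?thesis using p[of y] by (simp add: q_def)
qed

lemma Aco_0 [simp]: "Aco t 0 r = 1" by (simp add: Aco_def)
lemma Aco_zero_arg: "k > 0 \<Longrightarrow> Aco t k 0 = 0" by (simp add: Aco_def)

lemma keyid:
  fixes N y t g :: real assumes "N \<ge> 0"
  shows "y / (N + 2) * (g + g * ((1 / (N + 1)) * ((t * (N + 2) + y - 2) - N)))
        - (y - 1) / (N + 2) * (g * ((1 / (N + 1)) * ((t * (N + 2) + y - 2) - N)))
        = (y - 1 + t) / (N + 1) * g"
proof -
  have "N + 1 \<noteq> 0" "N + 2 \<noteq> 0" using assms by auto
  then show ?thesis by (simp add: divide_simps) (simp add: algebra_simps)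
qed

lemma Aco_diff:
  assumes "k > 0"
  shows "Aco t k y - Aco t k (y - 1) = Aco t (k - 1) (y - 1 + t)"
proof (cases k)
  case 0 then show ?thesis using assms by simp
next
  case (Suc j)
  show ?thesis
  proof (cases j)
    case 0 then show ?thesis using Suc by (simp add: Aco_def)
  next
    case (Suc n)
    define m where "m = Suc (Suc n)"
    define a where "a = t * real m + y - 2"
    define g where "g = a gchoose n"
    have k: "k = m" using \<open>k = Suc j\<close> Suc m_def by simp
    have e1: "t * real m + y - 1 = a + 1" by (simp add: a_def)
    have e2: "t * real m + (y - 1) - 1 = a" by (simp add: a_def)
    have e3: "t * real (Suc n) + (y - 1 + t) - 1 = a" by (simp add: a_def m_def algebra_simps)
    have p: "(a + 1) gchoose Suc n = g + g * ((1 / real (Suc n)) * (a - real n))"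
      using gbinomial_Suc_Suc[of a n] gch_Suc[of a n] by (simp add: g_def)
    have m0: "m \<noteq> 0" "m - 1 = Suc n" by (simp_all add: m_def)
    have A1: "Aco t m y = y / real m * ((a + 1) gchoose Suc n)"
      unfolding Aco_def e1[symmetric] using m0 by simp
    have A2: "Aco t m (y - 1) = (y - 1) / real m * (a gchoose Suc n)"
      unfolding Aco_def e2[symmetric] using m0 by simp
    have lhs: "Aco t m y - Aco t m (y - 1) =
        y / real m * (g + g * ((1 / real (Suc n)) * (a - real n)))
        - (y - 1) / real m * (g * ((1 / real (Suc n)) * (a - real n)))"
      unfolding A1 A2 p gch_Suc[of a n] g_def ..
    have rhs: "Aco t (m - 1) (y - 1 + t) = (y - 1 + t) / real (Suc n) * g"
      unfolding Aco_def using m0 e3 by (simp add: g_def)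
    have "y / real m * (g + g * ((1 / real (Suc n)) * (a - real n)))
        - (y - 1) / real m * (g * ((1 / real (Suc n)) * (a - real n)))
        = (y - 1 + t) / real (Suc n) * g"
      using keyid[of "real n" y g t] unfolding a_def m_def
      by (simp add: add.commute)
    then show ?thesis using lhs rhs k by simp
  qed
qed


lemma polyfun_Aco: "polyfun f \<Longrightarrow> polyfun (\<lambda>y. Aco t k (f y))"
proof (cases "k = 0")
  case True then show ?thesis by (simp add: polyfun_const)
next
  case False
  assume f: "polyfun f"
  have "(\<lambda>y. Aco t k (f y)) = (\<lambda>y. (f y * (1 / real k)) * ((f y + (t * real k - 1)) gchoose (k - 1)))"
    using False by (auto simp: Aco_def algebra_simps)
  moreover have "polyfun \<dots>"
    by (intro polyfun_mult polyfun_gchoose polyfun_add f polyfun_const)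
  ultimately show ?thesis by simp
qed

lemma Aco_conv: "(\<Sum>k\<le>n. Aco t k x * Aco t (n - k) y) = Aco t n (x + y)"
proof (induction n arbitrary: x y)
  case 0 then show ?case by simp
next
  case (Suc n)
  define D where "D y = (\<Sum>k\<le>Suc n. Aco t k x * Aco t (Suc n - k) y) - Aco t (Suc n) (x + y)" for y
  have per: "D y = D (y - 1)" for y
  proof -
    have "D y - D (y - 1) = (\<Sum>k\<le>Suc n. Aco t k x * (Aco t (Suc n - k) y - Aco t (Suc n - k) (y - 1)))
        - (Aco t (Suc n) (x + y) - Aco t (Suc n) (x + y - 1))"
      by (simp add: D_def sum_subtractf algebra_simps)
    also have "(\<Sum>k\<le>Suc n. Aco t k x * (Aco t (Suc n - k) y - Aco t (Suc n - k) (y - 1)))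
        = (\<Sum>k\<le>n. Aco t k x * Aco t (n - k) (y - 1 + t))"
    proof -
      have "(\<Sum>k\<le>Suc n. Aco t k x * (Aco t (Suc n - k) y - Aco t (Suc n - k) (y - 1)))
          = (\<Sum>k\<le>n. Aco t k x * (Aco t (Suc n - k) y - Aco t (Suc n - k) (y - 1)))"
        by simp
      also have "\<dots> = (\<Sum>k\<le>n. Aco t k x * Aco t (n - k) (y - 1 + t))"
      proof (rule sum.cong[OF refl])
        fix k assume "k \<in> {..n}"
        then have "Suc n - k > 0" "Suc n - k - 1 = n - k" by auto
        then show "Aco t k x * (Aco t (Suc n - k) y - Aco t (Suc n - k) (y - 1)) = Aco t k x * Aco t (n - k) (y - 1 + t)"
          using Aco_diff[of "Suc n - k" t y] by simp
      qed
      finally show ?thesis .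
    qed
    also have "Aco t (Suc n) (x + y) - Aco t (Suc n) (x + y - 1) = Aco t n (x + y - 1 + t)"
      using Aco_diff[of "Suc n" t "x + y"] by simp
    also have "(\<Sum>k\<le>n. Aco t k x * Aco t (n - k) (y - 1 + t)) = Aco t n (x + y - 1 + t)"
      using Suc.IH[of x "y - 1 + t"] by (simp add: algebra_simps)
    finally show ?thesis by simp
  qed
  have pf: "polyfun D"
    unfolding D_def
    by (intro polyfun_diff polyfun_sum polyfun_mult polyfun_const polyfun_Aco polyfun_id polyfun_add)
  have "D y = D 0" by (rule polyfun_periodic[OF pf per])
  also have "D 0 = 0"
  proof -
    have "(\<Sum>k\<le>Suc n. Aco t k x * Aco t (Suc n - k) 0) = (\<Sum>k\<in>{Suc n}. Aco t k x * Aco t (Suc n - k) 0)"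
      by (rule sum.mono_neutral_right) (auto simp: Aco_zero_arg)
    then show ?thesis by (simp add: D_def)
  qed
  finally show ?case by (simp add: D_def)
qed


definition FA :: "real \<Rightarrow> real \<Rightarrow> real fps" where
  "FA t r = Abs_fps (\<lambda>k. Aco t k r)"

lemma FA_mult: "FA t r * FA t s = FA t (r + s)"
  by (simp add: fps_eq_iff FA_def fps_mult_nth atLeast0AtMost Aco_conv)

lemma FA_zero: "FA t 0 = 1"
  by (simp add: fps_eq_iff FA_def Aco_zero_arg)

lemma FA_one: "FA t 1 = 1 + fps_X * FA t t"
proof (rule fps_ext)
  fix n show "FA t 1 $ n = (1 + fps_X * FA t t) $ n"
  proof (cases n)
    case 0 then show ?thesis by (simp add: FA_def)
  next
    case (Suc m)
    have "Aco t (Suc m) 1 = Aco t m t"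
    proof (cases m)
      case 0 then show ?thesis by (simp add: Aco_def)
    next
      case (Suc j)
      have ab: "real (Suc j) * ((t * real (Suc m)) gchoose Suc j) = t * real (Suc m) * ((t * real (Suc m) - 1) gchoose j)"
        by (rule gbinomial_absorption)
      have e: "t * real (Suc j) + t - 1 = t * real (Suc m) - 1" using Suc by (simp add: algebra_simps)
      have "Aco t (Suc m) 1 = 1 / real (Suc m) * ((t * real (Suc m)) gchoose Suc j)"
        using Suc by (simp add: Aco_def)
      also have "\<dots> = t / real (Suc j) * ((t * real (Suc m) - 1) gchoose j)"
        using ab by (simp add: field_simps del: of_nat_Suc)
      also have "\<dots> = Aco t m t" using Suc e by (simp add: Aco_def del: of_nat_Suc)
      finally show ?thesis .
    qed
    then show ?thesis using Suc by (simp add: FA_def)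
  qed
qed

lemma gbs_FA:
  assumes "r \<noteq> 0" "\<And>k. t * real k + r \<noteq> 0"
  shows "gen_binom_series t r = FA t r"
proof (rule fps_ext)
  fix n show "gen_binom_series t r $ n = FA t r $ n"
  proof (cases n)
    case 0 then show ?thesis using assms by (simp add: FA_def gen_binom_series_def)
  next
    case (Suc j)
    define w where "w = t * real n + r"
    have w0: "w \<noteq> 0" using assms(2) by (simp add: w_def)
    have ab: "real (Suc j) * (w gchoose Suc j) = w * ((w - 1) gchoose j)"
      by (rule gbinomial_absorption)
    have "gen_binom_series t r $ n = (w gchoose Suc j) * r / w"
      using Suc by (simp add: gen_binom_series_def w_def)
    also have "\<dots> = r / real (Suc j) * ((w - 1) gchoose j)"
      using ab w0 by (simp add: field_simps del: of_nat_Suc)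
    also have "\<dots> = FA t r $ n" using Suc by (simp add: FA_def Aco_def w_def del: of_nat_Suc)
    finally show ?thesis .
  qed
qed

lemma cubic_fact:
  fixes x a b c :: "'a::field"
  assumes x: "x \<noteq> 0" and ab: "a \<noteq> b" and ac: "a \<noteq> c" and bc: "b \<noteq> c"
    and ra: "1 - a + x * a^3 = 0" and rb: "1 - b + x * b^3 = 0" and rc: "1 - c + x * c^3 = 0"
  shows "[:1, -1, 0, x:] = smult x ([:- a, 1:] * [:- b, 1:] * [:- c, 1:])"
proof -
  have i1: "(a - b) * (x*(a^2+a*b+b^2) - 1) = (1 - a + x*a^3) - (1 - b + x*b^3)" by algebra
  have q1: "x*(a^2+a*b+b^2) = 1" using i1 ra rb ab by simp
  have i2: "(a - c) * (x*(a^2+a*c+c^2) - 1) = (1 - a + x*a^3) - (1 - c + x*c^3)" by algebra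
  have q2: "x*(a^2+a*c+c^2) = 1" using i2 ra rc ac by simp
  have i3: "(b - c) * (x*(a+b+c)) = x*(a^2+a*b+b^2) - x*(a^2+a*c+c^2)" by algebra
  have s: "a + b + c = 0" using i3 q1 q2 x bc by simp
  have c: "c = - a - b" using s by (simp add: algebra_simps eq_neg_iff_add_eq_0)
  have e1: "x*(a+b+c) = 0" using s by simp
  have e2: "x*(a*b+b*c+c*a) = -1"
  proof -
    have "x*(a*b+b*c+c*a) = - (x*(a^2+a*b+b^2))" unfolding c by algebra
    then show ?thesis using q1 by simp
  qed
  have e3: "x*(a*b*c) = -1"
  proof -
    have "x*(a*b*c) = (x * a^3 - a) - a * (x*(a^2+a*b+b^2)) + a" unfolding c by algebra
    also have "\<dots> = -1" using q1 ra by algebra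
    finally show ?thesis .
  qed
  have prod: "[:- a, 1:] * [:- b, 1:] * [:- c, 1:] = [:-(a*b*c), a*b+b*c+c*a, -(a+b+c), 1:]"
    by (simp add: algebra_simps)
  have f: "x * (b + c) = - (x * a)" using e1 by algebra
  show ?thesis unfolding prod using e2 e3 f
    by (simp add: algebra_simps)
qed

lemma cubic_unique:
  fixes W1 W2 Z :: "real fps"
  assumes "W1 = 1 + Z * W1^3" "W2 = 1 + Z * W2^3" "Z $ 0 = 0"
  shows "W1 = W2"
proof -
  have "(W1 - W2) * (1 - Z * (W1^2 + W1*W2 + W2^2)) = 0" using assms(1,2) by algebra
  moreover have "(1 - Z * (W1^2 + W1*W2 + W2^2)) $ 0 \<noteq> 0" using assms(3) by simp
  then have "1 - Z * (W1^2 + W1*W2 + W2^2) \<noteq> 0" by (metis fps_zero_nth)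
  ultimately show ?thesis by simp
qed

theorem mainTheorem10:
  fixes B3 s1 s2 :: "real fls" and x :: "real fls"
  defines "x \<equiv> fps_to_fls (fps_X ^ 2)"
    and "B3 \<equiv> fps_to_fls (gen_binom_series 3 1 oo fps_X ^ 2)"
    and "s1 \<equiv> - (fls_X_inv * fps_to_fls (gen_binom_series (3/2) (-1/2) oo (- fps_X)))"
    and "s2 \<equiv> fls_X_inv * fps_to_fls (gen_binom_series (3/2) (-1/2))"
  shows "gen_binom_series 3 1 = 1 + fps_X * gen_binom_series 3 1 ^ 3 \<and>
         gen_binom_series 3 1 oo fps_X ^ 2 =
           gen_binom_series (3/2) (1/2) * (gen_binom_series (3/2) (1/2) oo (- fps_X)) \<and>
         poly [:1, -1, 0, x:] s1 = 0 \<and>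
         poly [:1, -1, 0, x:] s2 = 0 \<and>
         [:1, -1, 0, x:] = smult x ([:- B3, 1:] * [:- s1, 1:] * [:- s2, 1:])"
proof -
  have gG: "gen_binom_series 3 1 = FA 3 1"
  proof (rule gbs_FA)
    fix k :: nat have "3 * real k + 1 > 0" by simp
    then show "3 * real k + 1 \<noteq> 0" by linarith
  qed simp
  have gP: "gen_binom_series (3/2) (1/2) = FA (3/2) (1/2)"
  proof (rule gbs_FA)
    fix k :: nat have "3/2 * real k + 1/2 > 0" by simp
    then show "3/2 * real k + 1/2 \<noteq> 0" by linarith
  qed simp
  have gC: "gen_binom_series (3/2) (-1/2) = FA (3/2) (-1/2)"
  proof (rule gbs_FA)
    fix k :: nat show "3/2 * real k + -1/2 \<noteq> 0"
    proof (cases k)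
      case (Suc j) then have "3/2 * real k \<ge> 3/2" by simp
      then show ?thesis by linarith
    qed simp
  qed simp
  define G where "G = FA 3 1"
  define P where "P = FA (3/2) (1/2)"
  define C where "C = FA (3/2) (-1/2)"
  have hA: "G = 1 + fps_X * G^3"
  proof -
    have "G^3 = FA 3 3"
      unfolding G_def power3_eq_cube FA_mult by simp
    then show ?thesis using FA_one[of 3] unfolding G_def by simp
  qed
  have hP: "P^2 = 1 + fps_X * P^3"
  proof -
    have "P^2 = FA (3/2) 1" unfolding P_def power2_eq_square FA_mult by simp
    moreover have "P^3 = FA (3/2) (3/2)" unfolding P_def power3_eq_cube FA_mult by simp
    ultimately show ?thesis using FA_one[of "3/2"] by simp
  qed
  have hCP: "C * P = 1" unfolding C_def P_def FA_mult by (simp add: FA_zero)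
  have hC: "C = C^3 + fps_X" using hP hCP by algebra
  have P0: "P $ 0 = 1" by (simp add: P_def FA_def)
  have C0: "C $ 0 = 1" by (simp add: C_def FA_def)
  have mX0: "(- fps_X :: real fps) $ 0 = 0" by simp
  have X20: "(fps_X ^ 2 :: real fps) $ 0 = 0" by simp
  define v where "v = P oo (- fps_X)"
  have hv: "v^2 = 1 - fps_X * v^3"
  proof -
    have "P^2 oo (- fps_X) = (1 + fps_X * P^3) oo (- fps_X)" using hP by simp
    then show ?thesis
      by (simp add: v_def fps_compose_power[OF mX0, symmetric] fps_compose_add_distrib
          fps_compose_mult_distrib[OF mX0])
  qed
  define R where "R = G oo fps_X ^ 2"
  have hR: "R = 1 + fps_X^2 * R^3"
  proof -
    have "G oo fps_X ^ 2 = (1 + fps_X * G^3) oo fps_X ^ 2" using hA by simp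
    then show ?thesis
      by (simp add: R_def fps_compose_power[OF X20, symmetric] fps_compose_add_distrib
          fps_compose_mult_distrib[OF X20])
  qed
  have hQ: "P * v = 1 + fps_X^2 * (P * v)^3"
  proof -
    have "(P + v) * (P * v - (1 + fps_X^2 * (P * v)^3)) = 0" using hP hv by algebra
    moreover have "(P + v) $ 0 \<noteq> 0" using P0 by (simp add: v_def)
    then have "P + v \<noteq> 0" by (metis fps_zero_nth)
    ultimately show ?thesis by simp
  qed
  have part2: "R = P * v" by (rule cubic_unique[OF hR hQ]) simp
  define D where "D = C oo (- fps_X)"
  have hD: "D = D^3 - fps_X"
  proof -
    have "C oo (- fps_X) = (C^3 + fps_X) oo (- fps_X)" using hC by simp
    then show ?thesis
      by (simp add: D_def fps_compose_power[OF mX0, symmetric] fps_compose_add_distrib)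
  qed
  have D0: "D $ 0 = 1" using C0 by (simp add: D_def)
  define fC where "fC = fps_to_fls C"
  define fD where "fD = fps_to_fls D"
  have hfC: "fC = fC^3 + fls_X" unfolding fC_def
    by (subst hC) (simp add: fps_to_fls_power)
  have hfD: "fD = fD^3 - fls_X" unfolding fD_def
    by (subst hD) (simp add: fps_to_fls_power)
  have Xi: "fls_X_inv * fls_X = (1 :: real fls)"
    by (simp add: fls_inverse_X[symmetric])
  have xX: "x = fls_X ^ 2" by (simp add: x_def fps_to_fls_power)
  have s2e: "s2 = fls_X_inv * fC" unfolding s2_def fC_def gC C_def ..
  have s1e: "s1 = - (fls_X_inv * fD)" unfolding s1_def fD_def gC C_def D_def ..
  have B3e: "B3 = fps_to_fls R" by (simp add: B3_def R_def gG G_def)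
  have r1: "poly [:1, -1, 0, x:] s1 = 0"
    unfolding s1e xX using Xi hfD by simp algebra
  have r2: "poly [:1, -1, 0, x:] s2 = 0"
    unfolding s2e xX using Xi hfC by simp algebra
  have r3: "poly [:1, -1, 0, x:] B3 = 0"
  proof -
    have "fps_to_fls R = 1 + x * fps_to_fls R ^ 3"
      unfolding x_def by (subst hR) (simp add: fps_to_fls_power fls_times_fps_to_fls)
    then show ?thesis unfolding B3e by simp algebra
  qed
  have n1: "fls_nth s1 (-1) = -1" using D0
    by (simp add: s1e fls_X_inv_times_conv_shift fD_def)
  have n2: "fls_nth s2 (-1) = 1" using C0
    by (simp add: s2e fls_X_inv_times_conv_shift fC_def)
  have n3: "fls_nth B3 (-1) = 0" by (simp add: B3e)
  have x0: "x \<noteq> 0" by (simp add: xX)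
  have fact: "[:1, -1, 0, x:] = smult x ([:- B3, 1:] * [:- s1, 1:] * [:- s2, 1:])"
    by (rule cubic_fact[OF x0 _ _ _ _ _ _])
       (use n1 n2 n3 r1 r2 r3 in \<open>auto simp: algebra_simps power3_eq_cube\<close>)
  have p1: "gen_binom_series 3 1 = 1 + fps_X * gen_binom_series 3 1 ^ 3"
    using hA by (simp add: gG G_def)
  have p2: "gen_binom_series 3 1 oo fps_X ^ 2 =
           gen_binom_series (3/2) (1/2) * (gen_binom_series (3/2) (1/2) oo (- fps_X))"
    using part2 by (simp add: gG gP G_def P_def R_def v_def)
  show ?thesis using p1 p2 r1 r2 fact by blast
qed

end
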